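(* For integers $n\ge 1$ and $i\ge 0$, let $S_n(i):=\sum_{j=0}^{n} \frac{q^{ij}(q;q)_{n+j}}{(q^2;q^2)_j}$ (and similarly $S_{n-1}(i)$). Then \[ S_n(i)=S_{n-1}(i)-q^n S_{n-1}(i+1)+q^{in}(q;q^2)_n . \]
   Context: For integers $m,i\ge0$, $S_m(i):=\sum_{j=0}^{m} \frac{q^{ij}(q;q)_{m+j}}{(q^2;q^2)_j}$, a rational function of $q$. Here $(a;q)_0:=1$ and $(a;q)_n:=(1-a)(1-aq)\cdots(1-aq^{n-1})$ for $n\ge1$. *)

theory Defs
  imports "HOL-Computational_Algebra.Polynomial" "HOL-Computational_Algebra.Fraction_Field"
begin

definition qpoch :: "'a::comm_ring_1 \<Rightarrow> 'a \<Rightarrow> nat \<Rightarrow> 'a" where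
  "qpoch a q n = (\<Prod>k<n. 1 - a * q ^ k)"

definition qvar :: "rat poly fract" where
  "qvar = Fract [:0, 1:] 1"

definition S :: "nat \<Rightarrow> nat \<Rightarrow> rat poly fract" where
  "S m i = (\<Sum>j=0..m. qvar ^ (i * j) * qpoch qvar qvar (m + j) / qpoch (qvar^2) (qvar^2) j)"

end

theory Submission
  imports Defs
begin

lemma qpoch_Suc: "qpoch a q (Suc n) = qpoch a q n * (1 - a * q ^ n)"
  by (simp add: qpoch_def)

lemma qpoch_double: "qpoch q q (2*n) = qpoch q (q^2) n * qpoch (q^2) (q^2) n"
proof (induction n)
  case 0 then show ?case by (simp add: qpoch_def)
next
  case (Suc n)
  have "qpoch q q (2 * Suc n) = qpoch q q (Suc (Suc (2*n)))" by simp
  also have "\<dots> = qpoch q q (2*n) * (1 - q*q^(2*n)) * (1 - q*q^(Suc (2*n)))"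
    by (simp only: qpoch_Suc)
  also have "\<dots> = qpoch q (q^2) n * (1 - q*(q^2)^n) * (qpoch (q^2) (q^2) n * (1 - q^2*(q^2)^n))"
    using Suc by (simp add: power_mult algebra_simps power2_eq_square)
  finally show ?case by (simp add: qpoch_Suc)
qed

lemma qvar_pow: "qvar ^ k = Fract ([:0,1:]^k) 1"
  by (induction k) (simp_all add: qvar_def One_fract_def mult.commute)

lemma qvar_pow_ne1: "k > 0 \<Longrightarrow> qvar ^ k \<noteq> 1"
proof
  assume k: "k > 0" and "qvar ^ k = 1"
  then have "Fract ([:0,1:]^k) 1 = Fract (1::rat poly) 1" by (simp add: qvar_pow One_fract_def)
  then have "[:0,1:]^k = (1::rat poly)" by (simp add: eq_fract)
  then have "degree ([:0,1::rat:]^k) = 0" by simp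
  moreover have "degree ([:0,1::rat:]^k) = k" by (simp add: degree_power_eq)
  ultimately show False using k by simp
qed

lemma D_fac: "1 - qvar\<^sup>2 * (qvar\<^sup>2) ^ k \<noteq> 0"
proof -
  have "qvar^2 * (qvar^2)^k = (qvar^2) ^ (Suc k)" by (simp only: power_Suc)
  also have "\<dots> = qvar ^ (2 * Suc k)" by (simp only: power_mult)
  finally show ?thesis using qvar_pow_ne1[of "2*Suc k"] by simp
qed

lemma D_nz: "qpoch (qvar^2) (qvar^2) n \<noteq> 0"
  unfolding qpoch_def using D_fac by (simp add: prod_zero_iff)

theorem lemma3p1:
  fixes n i :: nat
  assumes "n \<ge> 1"
  shows "S n i = S (n - 1) i - qvar ^ n * S (n - 1) (i + 1) + qvar ^ (i * n) * qpoch qvar (qvar^2) n"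
proof -
  obtain m where n: "n = Suc m" using assms by (cases n) auto
  let ?q = qvar
  have trm: "?q ^ (i*j) * qpoch ?q ?q (m + j) / qpoch (?q^2) (?q^2) j
      - ?q ^ Suc m * (?q ^ ((i+1)*j) * qpoch ?q ?q (m + j) / qpoch (?q^2) (?q^2) j)
      = ?q ^ (i*j) * qpoch ?q ?q (Suc m + j) / qpoch (?q^2) (?q^2) j" for j
  proof -
    have "qpoch ?q ?q (Suc m + j) = qpoch ?q ?q (m+j) * (1 - ?q * ?q^(m+j))"
      by (simp add: qpoch_Suc)
    then show ?thesis using D_nz[of j] apply (simp add: field_simps power_add)
      apply (drule arg_cong[where f="(*) (qvar^(i*j))"]) by (simp add: algebra_simps)
  qed
  have A: "S m i - ?q ^ Suc m * S m (i+1) = (\<Sum>j=0..m. ?q ^ (i*j) * qpoch ?q ?q (Suc m + j) / qpoch (?q^2) (?q^2) j)"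
    unfolding S_def sum_distrib_left sum_subtractf[symmetric] by (rule sum.cong) (simp_all only: trm add_Suc)
  have last: "?q ^ (i*Suc m) * qpoch ?q ?q (Suc m + Suc m) / qpoch (?q^2) (?q^2) (Suc m)
      = ?q ^ (i * Suc m) * qpoch ?q (?q^2) (Suc m)"
  proof -
    have "qpoch ?q ?q (Suc m + Suc m) = qpoch ?q (?q^2) (Suc m) * qpoch (?q^2) (?q^2) (Suc m)"
      using qpoch_double[of ?q "Suc m"] by (simp add: mult_2)
    then show ?thesis using D_nz[of "Suc m"] by simp
  qed
  have "S (Suc m) i = (\<Sum>j=0..m. ?q ^ (i*j) * qpoch ?q ?q (Suc m + j) / qpoch (?q^2) (?q^2) j)
      + ?q ^ (i*Suc m) * qpoch ?q ?q (Suc m + Suc m) / qpoch (?q^2) (?q^2) (Suc m)"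
    unfolding S_def by (simp add: sum.atLeast0_atMost_Suc)
  then show ?thesis using A last n by simp
qed

end
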